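(* Consider the iterates of the partially Jacobi 3-block algorithm (context) and fix $k\ge0$ with $\eta_k\in(0,1/\nu)$. Then for every $w=(x;y;z;\lambda)\in\Omega$, $$F(w)-F(\tilde w^k)+\langle w-\tilde w^k,\mathcal J(w)\rangle\ge(w-\tilde w^k)^\top Q_k(w^k-\tilde w^k)+\zeta^k(x),$$ where $$Q_k=\begin{bmatrix}\mathcal D_k&0&0&0\\0&L_1+\beta B^\top B&0&-\tau B^\top\\0&0&L_2+\beta C^\top C&-\tau C^\top\\0&-B&-C&\frac1\beta I\end{bmatrix}.$$
   Context: Setting. $\mathcal X\subset\mathbb R^{n_1}$, $\mathcal Y\subset\mathbb R^{n_2}$, $\mathcal Z\subset\mathbb R^{n_3}$ are nonempty closed convex sets; $A\in\mathbb R^{n\times n_1}$, $B\in\mathbb R^{n\times n_2}$, $C\in\mathbb R^{n\times n_3}$, $b\in\mathbb R^n$; $g:\mathcal Y\to\mathbb R\cup\{+\infty\}$ and $l:\mathcal Z\to\mathbb R\cup\{+\infty\}$ are proper closed convex; $f=\frac1N\sum_{j=1}^Nf_j$, each $f_j$ real-valued, convex and continuously differentiable on an open set containing $\mathcal X$. Problem: $\min\{f(x)+g(y)+l(z): Ax+By+Cz=b,\ x\in\mathcal X,y\in\mathcal Y,z\in\mathcal Z\}$. A fixed symmetric positive definite $H$ and $\nu>0$ satisfy $\|\nabla f_j(x_1)-\nabla f_j(x_2)\|_{H^{-1}}\le\nu\|x_1-x_2\|_H$ for all $x_1,x_2\in\mathcal X$, all $j$. For symmetric $G$, $\|v\|_G^2:=v^\top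 Gv$; $G_1\succeq G_2$ means $G_1-G_2$ is positive semidefinite. $\Delta:=\{(\tau,s):\tau+s>0,\ \tau\le1,\ -\tau^2-s^2-\tau s+\tau+s+1\ge0\}$. Subroutine xsub. Inputs: $x^k\in\mathcal X$, $\breve x^k$, $h\in\mathbb R^{n_1}$, an integer $m_k\ge1$, $\eta_k>0$, a symmetric matrix $M_k$. Set $x_1=x^k$, $\breve x_1=\breve x^k$. For $t=1,\dots,m_k$: draw $\xi_t$ uniformly from $\{1,\dots,N\}$, independently of everything generated before; set $\beta_t=2/(t+1)$, $\gamma_t=2/(t\eta_k)$, $\hat x_t=\beta_t\breve x_t+(1-\beta_t)x_t$, $d_t=\nabla f_{\xi_t}(\hat x_t)+e_t$ where $e_t$ is a random vector whose conditional expectation given all previously generated random quantities and $\xi_t$ is $0$; $\breve x_{t+1}=\arg\min_{x\in\mathcal X}\{\langle d_t+h,x\rangle+\frac{\gamma_t}2\|x-\breve x_t\|_H^2+\frac12\|x-x^k\|_{M_k}^2\}$; $x_{t+1}=\beta_t\breve x_{t+1}+(1-\beta_t)x_t$. Output $x^{k+1}=x_{m_k+1}$, $\breve x^{k+1}=\breve x_{m_k+1}$. Put $\delta_t=\nabla f(\hat x_t)-d_t$ (inner quantities of outer iteration $k$), and for $x\in\mathcal X$ $$\zeta^k(x)=\frac{2}{m_k(m_k+1)}\Big[\frac1{\eta_k}\big(\|x-\breve x^{k+1}\|_H^2-\|x-\breve x^k\|_H^2\big)-\sum_{t=1}^{m_k}t\langle\delta_t,\breve x_t-x\rangle-\frac{\eta_k}{4(1-\eta_k\nu)}\sum_{t=1}^{m_k}t^2\|\delta_t\|_{H^{-1}}^2\Big].$$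 Partially Jacobi 3-block algorithm. Parameters: $\beta>0$, $H$, $(\tau,s)\in\Delta$, symmetric matrices $L_1\in\mathbb R^{n_2\times n_2}$, $L_2\in\mathbb R^{n_3\times n_3}$. Start: $(x^0,y^0,z^0,\lambda^0)\in\mathcal X\times\mathcal Y\times\mathcal Z\times\mathbb R^n$, $\breve x^0=x^0$. For $k=0,1,\dots$: choose integer $m_k\ge1$, $\eta_k>0$, symmetric $M_k$ with $\mathcal D_k:=M_k-\beta A^\top A\succeq0$; $h^k=-A^\top[\lambda^k-\beta(Ax^k+By^k+Cz^k-b)]$; $(x^{k+1},\breve x^{k+1})$ from xsub with inputs $x^k,\breve x^k,h^k,m_k,\eta_k,M_k$; $\lambda^{k+1/2}=\lambda^k-\tau\beta(Ax^{k+1}+By^k+Cz^k-b)$; $y^{k+1}\in\arg\min_{y\in\mathcal Y}g(y)+\frac\beta2\|Ax^{k+1}+By+Cz^k-b-\lambda^{k+1/2}/\beta\|^2+\frac12\|y-y^k\|_{L_1}^2$; $z^{k+1}\in\arg\min_{z\in\mathcal Z}l(z)+\frac\beta2\|Ax^{k+1}+By^k+Cz-b-\lambda^{k+1/2}/\beta\|^2+\frac12\|z-z^k\|_{L_2}^2$; $\lambda^{k+1}=\lambda^{k+1/2}-s\beta(Ax^{k+1}+By^{k+1}+Cz^{k+1}-b)$. (Minimizers are assumed to exist.) Notation. $\Omega=\mathcal X\times\mathcal Y\times\mathcal Z\times\mathbb R^n$; $w=(x;y;z;\lambda)$; $\mathcal Kw=Ax+By+Cz$; $F(w)=f(x)+g(y)+l(z)$;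 $\mathcal J(w)=(-A^\top\lambda;-B^\top\lambda;-C^\top\lambda;\mathcal Kw-b)$; $w^k=(x^k;y^k;z^k;\lambda^k)$; $\tilde\lambda^k=\lambda^k-\beta(Ax^{k+1}+By^k+Cz^k-b)$; $\tilde w^k=(x^{k+1};y^{k+1};z^{k+1};\tilde\lambda^k)$. *)

theory Defs
  imports "HOL-Analysis.Analysis"
begin

definition qn :: "real^'n^'n \<Rightarrow> real^'n \<Rightarrow> real" where
  "qn G v = v \<bullet> (G *v v)"

definition gnorm :: "real^'n^'n \<Rightarrow> real^'n \<Rightarrow> real" where
  "gnorm G v = sqrt (qn G v)"

definition symmetric_mat :: "real^'n^'n \<Rightarrow> bool" where
  "symmetric_mat G \<longleftrightarrow> transpose G = G"

definition psd :: "real^'n^'n \<Rightarrow> bool" where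
  "psd G \<longleftrightarrow> (\<forall>v. 0 \<le> qn G v)"

definition posdef :: "real^'n^'n \<Rightarrow> bool" where
  "posdef G \<longleftrightarrow> symmetric_mat G \<and> (\<forall>v. v \<noteq> 0 \<longrightarrow> 0 < qn G v)"

definition Delta :: "(real \<times> real) set" where
  "Delta = {(\<tau>, s). \<tau> + s > 0 \<and> \<tau> \<le> 1 \<and> - (\<tau> ^ 2) - (s ^ 2) - \<tau> * s + \<tau> + s + 1 \<ge> 0}"

definition fbar :: "nat \<Rightarrow> (nat \<Rightarrow> 'a \<Rightarrow> real) \<Rightarrow> 'a \<Rightarrow> real" where
  "fbar N fj u = (1 / real N) * (\<Sum>j=1..N. fj j u)"

definition gradf :: "nat \<Rightarrow> (nat \<Rightarrow> 'a \<Rightarrow> 'b::real_vector) \<Rightarrow> 'a \<Rightarrow> 'b" where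
  "gradf N gj u = (1 / real N) *\<^sub>R (\<Sum>j=1..N. gj j u)"

definition betaT :: "nat \<Rightarrow> real" where "betaT t = 2 / (real t + 1)"
definition gammaT :: "real \<Rightarrow> nat \<Rightarrow> real" where "gammaT \<eta> t = 2 / (real t * \<eta>)"

definition xhat :: "(nat \<Rightarrow> real^'n) \<Rightarrow> (nat \<Rightarrow> real^'n) \<Rightarrow> nat \<Rightarrow> real^'n" where
  "xhat xs xbs t = betaT t *\<^sub>R xbs t + (1 - betaT t) *\<^sub>R xs t"

definition xsub_obj :: "real^'n^'n \<Rightarrow> real^'n^'n \<Rightarrow> real \<Rightarrow> real^'n \<Rightarrow> real^'n \<Rightarrow> real^'n
    \<Rightarrow> real^'n \<Rightarrow> real" where
  "xsub_obj H Mk \<gamma> dh xbt xk u = dh \<bullet> u + \<gamma> / 2 * qn H (u - xbt) + 1/2 * qn Mk (u - xk)"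

text \<open>The error term \<open>\<zeta>^k(x)\<close>; \<open>\<delta>\<close> and \<open>xbs\<close> are the inner sequences of iteration k.\<close>
definition zeta :: "real^'n^'n \<Rightarrow> real \<Rightarrow> real \<Rightarrow> nat \<Rightarrow> real^'n \<Rightarrow> real^'n
    \<Rightarrow> (nat \<Rightarrow> real^'n) \<Rightarrow> (nat \<Rightarrow> real^'n) \<Rightarrow> real^'n \<Rightarrow> real" where
  "zeta H \<nu> \<eta> m xbk xbk1 \<delta> xbs x =
     2 / (real m * (real m + 1)) *
       ((1 / \<eta>) * (qn H (x - xbk1) - qn H (x - xbk))
        - (\<Sum>t=1..m. real t * (\<delta> t \<bullet> (xbs t - x)))
        - \<eta> / (4 * (1 - \<eta> * \<nu>)) * (\<Sum>t=1..m. (real t)^2 * qn (matrix_inv H) (\<delta> t)))"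

definition Jop :: "real^'n1^'m \<Rightarrow> real^'n2^'m \<Rightarrow> real^'n3^'m \<Rightarrow> real^'m
    \<Rightarrow> (real^'n1) \<times> (real^'n2) \<times> (real^'n3) \<times> (real^'m) \<Rightarrow> (real^'n1) \<times> (real^'n2) \<times> (real^'n3) \<times> (real^'m)" where
  "Jop A B C b w = (case w of (x, y, z, lm) \<Rightarrow>
     (- (transpose A *v lm), - (transpose B *v lm), - (transpose C *v lm), A *v x + B *v y + C *v z - b))"

definition Fobj :: "(real^'n1 \<Rightarrow> real) \<Rightarrow> (real^'n2 \<Rightarrow> ereal) \<Rightarrow> (real^'n3 \<Rightarrow> ereal)
    \<Rightarrow> (real^'n1) \<times> (real^'n2) \<times> (real^'n3) \<times> (real^'m) \<Rightarrow> ereal" where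
  "Fobj f g l w = (case w of (x, y, z, lm) \<Rightarrow> ereal (f x) + g y + l z)"

text \<open>\<open>Qmul ... v = Q_k v\<close> for the block matrix
  \<open>Q_k = [[D,0,0,0],[0,L1+\<beta>B^TB,0,-\<tau>B^T],[0,0,L2+\<beta>C^TC,-\<tau>C^T],[0,-B,-C,I/\<beta>]]\<close>.\<close>
definition Qmul :: "real^'n1^'n1 \<Rightarrow> real^'n2^'n2 \<Rightarrow> real^'n3^'n3 \<Rightarrow> real^'n2^'m \<Rightarrow> real^'n3^'m
    \<Rightarrow> real \<Rightarrow> real \<Rightarrow> (real^'n1) \<times> (real^'n2) \<times> (real^'n3) \<times> (real^'m)
    \<Rightarrow> (real^'n1) \<times> (real^'n2) \<times> (real^'n3) \<times> (real^'m)" where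
  "Qmul D L1 L2 B C \<beta> \<tau> v = (case v of (x, y, z, lm) \<Rightarrow>
     (D *v x,
      (L1 + \<beta> *\<^sub>R (transpose B ** B)) *v y - \<tau> *\<^sub>R (transpose B *v lm),
      (L2 + \<beta> *\<^sub>R (transpose C ** C)) *v z - \<tau> *\<^sub>R (transpose C *v lm),
      - (B *v y) - (C *v z) + (1 / \<beta>) *\<^sub>R lm))"

definition proper_closed_convex :: "'a::real_normed_vector set \<Rightarrow> ('a \<Rightarrow> ereal) \<Rightarrow> bool" where
  "proper_closed_convex S g \<longleftrightarrow>
     (\<exists>y\<in>S. g y \<noteq> \<infinity>) \<and> (\<forall>y\<in>S. g y \<noteq> - \<infinity>) \<and>
     (\<forall>y1\<in>S. \<forall>y2\<in>S. \<forall>u::real. 0 \<le> u \<and> u \<le> 1 \<longrightarrow>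
        g (u *\<^sub>R y1 + (1 - u) *\<^sub>R y2) \<le> ereal u * g y1 + ereal (1 - u) * g y2) \<and>
     closed {(y, t::real). y \<in> S \<and> g y \<le> ereal t}"

end

theory Submission
  imports Defs
begin


lemma dot_transpose: "(transpose A *v u) \<bullet> v = u \<bullet> (A *v (v::real^'n))"
  by (simp add: dot_lmul_matrix)

lemma sym_dot: "symmetric_mat H \<Longrightarrow> u \<bullet> (H *v v) = v \<bullet> (H *v (u::real^'n))"
  by (metis dot_transpose inner_commute symmetric_mat_def)

lemma qn_scale: "qn G (a *\<^sub>R u) = a^2 * qn G u"
  by (simp add: qn_def matrix_vector_mult_scaleR power2_eq_square)

lemma qn_add: "symmetric_mat G \<Longrightarrow> qn G (u + v) = qn G u + 2 * (u \<bullet> (G *v v)) + qn G v"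
  unfolding qn_def using sym_dot[of G u v]
  by (simp add: matrix_vector_right_distrib inner_add_left inner_add_right)

lemma qn_diff: "symmetric_mat G \<Longrightarrow> qn G (u - v) = qn G u - 2 * (u \<bullet> (G *v v)) + qn G v"
  unfolding qn_def using sym_dot[of G u v]
  by (simp add: matrix_vector_mult_diff_distrib inner_diff_left inner_diff_right)

lemma qn_minus: "qn G (- u) = qn G u"
  using qn_scale[of G "-1" u] by simp

lemma posdef_invertible:
  assumes "posdef (H::real^'n^'n)" shows "invertible H"
proof -
  have "inj ((*v) H)"
  proof (rule injI)
    fix u v assume "H *v u = H *v v"
    hence "H *v (u - v) = 0" by (simp add: matrix_vector_mult_diff_distrib)
    hence "qn H (u - v) = 0" by (simp add: qn_def)
    thus "u = v" using assms unfolding posdef_def by (metis less_irrefl eq_iff_diff_eq_0)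
  qed
  then obtain B where "B ** H = mat 1" using matrix_left_invertible_injective by blast
  thus ?thesis using invertible_left_inverse by blast
qed

lemma H_Hinv: assumes "posdef (H::real^'n^'n)" shows "H *v (matrix_inv H *v a) = a"
proof -
  have "invertible H" using posdef_invertible[OF assms] .
  hence "H ** matrix_inv H = mat 1"
    unfolding invertible_def matrix_inv_def by (rule someI_ex[where P="\<lambda>A'. H ** A' = mat 1 \<and> A' ** H = mat 1", THEN conjunct1])
  thus ?thesis by (metis matrix_vector_mul_assoc matrix_vector_mul_lid)
qed

lemma qn_Hinv: assumes "posdef (H::real^'n^'n)"
  shows "qn (matrix_inv H) a = qn H (matrix_inv H *v a)"
  using H_Hinv[OF assms, of a] assms unfolding qn_def posdef_def
  by (metis inner_commute)

lemma qn_Hinv_nonneg: assumes "posdef (H::real^'n^'n)" shows "0 \<le> qn (matrix_inv H) a"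
  using qn_Hinv[OF assms] assms unfolding posdef_def
  by (metis order_refl less_imp_le qn_def inner_zero_left)

lemma quad_bound:
  assumes H: "posdef (H::real^'n^'n)" and c: "c > 0"
  shows "a \<bullet> d - c * qn H d \<le> qn (matrix_inv H) a / (4 * c)"
proof -
  define v where "v = matrix_inv H *v a"
  have Hv: "H *v v = a" using H_Hinv[OF H] v_def by simp
  have sym: "symmetric_mat H" using H posdef_def by auto
  have nn: "0 \<le> qn H (d - (1/(2*c)) *\<^sub>R v)"
    using H unfolding posdef_def by (metis order_refl less_imp_le qn_def inner_zero_left)
  have "qn H (d - (1/(2*c)) *\<^sub>R v) = qn H d - 2 * (1/(2*c)) * (d \<bullet> a) + (1/(2*c))^2 * qn H v"
    using qn_diff[OF sym, of d "(1/(2*c)) *\<^sub>R v"] qn_scale[of H "1/(2*c)" v]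
    by (simp add: matrix_vector_mult_scaleR Hv)
  moreover have "qn (matrix_inv H) a = qn H v" using qn_Hinv[OF H] v_def by simp
  ultimately have "0 \<le> qn H d - (1/c) * (d \<bullet> a) + (1/(2*c))^2 * qn (matrix_inv H) a"
    using nn by simp
  hence "0 \<le> c * (qn H d - (1/c) * (d \<bullet> a) + (1/(2*c))^2 * qn (matrix_inv H) a)"
    using c by simp
  moreover have "c * (qn H d - (1/c) * (d \<bullet> a) + (1/(2*c))^2 * qn (matrix_inv H) a)
      = c * qn H d - d \<bullet> a + qn (matrix_inv H) a / (4 * c)"
    using c by (simp add: field_simps power2_eq_square)
  ultimately have "0 \<le> c * qn H d - d \<bullet> a + qn (matrix_inv H) a / (4 * c)" by simp
  thus ?thesis by (simp add: inner_commute)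
qed

lemma psd_nonneg: "psd G \<Longrightarrow> 0 \<le> qn G v" by (simp add: psd_def)

lemma qn_convex:
  assumes sym: "symmetric_mat M" and p: "psd M" and b: "0 \<le> b" "b \<le> 1"
  shows "qn M (b *\<^sub>R q + (1 - b) *\<^sub>R p) \<le> b * qn M q + (1 - b) * qn M p"
proof -
  define X where "X = p \<bullet> (M *v (q - p))"
  define Y where "Y = qn M (q - p)"
  have e: "b *\<^sub>R q + (1 - b) *\<^sub>R p = p + b *\<^sub>R (q - p)" by (simp add: algebra_simps)
  have 1: "qn M (b *\<^sub>R q + (1 - b) *\<^sub>R p) = qn M p + 2 * b * X + b^2 * Y"
    unfolding e X_def Y_def
    using qn_add[OF sym, of p "b *\<^sub>R (q-p)"] qn_scale[of M b "q-p"] by (simp add: matrix_vector_mult_scaleR)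
  have 2: "qn M q = qn M p + 2 * X + Y"
    using qn_add[OF sym, of p "q-p"] unfolding X_def Y_def by simp
  have 3: "b^2 * Y \<le> b * Y"
  proof -
    have "b^2 \<le> b" using b by (simp add: power2_eq_square mult_left_le)
    thus ?thesis using psd_nonneg[OF p, of "q-p"] unfolding Y_def by (simp add: mult_right_mono)
  qed
  have "b * qn M q + (1 - b) * qn M p = qn M p + 2 * b * X + b * Y"
    unfolding 2 by (simp add: algebra_simps)
  thus ?thesis using 1 3 by linarith
qed



lemma line_deriv:
  fixes f :: "real^'n \<Rightarrow> real"
  assumes "(f has_derivative (\<lambda>h. g \<bullet> h)) (at (x + s *\<^sub>R w))"
  shows "((\<lambda>s. f (x + s *\<^sub>R w)) has_real_derivative (g \<bullet> w)) (at s)"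
proof -
  have l: "((\<lambda>s. x + s *\<^sub>R w) has_derivative (\<lambda>h. h *\<^sub>R w)) (at s)"
    by (auto intro!: derivative_eq_intros)
  have "((\<lambda>s. f (x + s *\<^sub>R w)) has_derivative (\<lambda>h. g \<bullet> (h *\<^sub>R w))) (at s)"
    using has_derivative_compose[OF l assms] .
  moreover have "(\<lambda>h. g \<bullet> (h *\<^sub>R w)) = (*) (g \<bullet> w)" by (auto simp: fun_eq_iff)
  ultimately show ?thesis by (simp add: has_field_derivative_def)
qed

lemma grad_ineq:
  fixes f :: "real^'n \<Rightarrow> real"
  assumes cv: "convex_on X f" and u: "u \<in> X" and v: "v \<in> X"
    and d: "(f has_derivative (\<lambda>h. G \<bullet> h)) (at u)"
  shows "f u + G \<bullet> (v - u) \<le> f v"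
proof -
  define w where "w = v - u"
  have D: "((\<lambda>s. f (u + s *\<^sub>R w)) has_real_derivative (G \<bullet> w)) (at 0)"
    using line_deriv[of f G u 0 w] d by simp
  hence lim: "((\<lambda>s. (f (u + s *\<^sub>R w) - f u) / s) \<longlongrightarrow> G \<bullet> w) (at_right 0)"
    unfolding has_field_derivative_iff by (auto intro: tendsto_mono[OF at_le])
  have key: "(f (u + s *\<^sub>R w) - f u) / s \<le> f v - f u" if s: "s \<in> {0<..<(1::real)}" for s
  proof -
    have e: "u + s *\<^sub>R w = (1 - s) *\<^sub>R u + s *\<^sub>R v" by (simp add: w_def algebra_simps)
    have "f (u + s *\<^sub>R w) \<le> (1 - s) * f u + s * f v"
      unfolding e using convex_onD[OF cv, of s u v] s u v by auto
    hence "f (u + s *\<^sub>R w) - f u \<le> s * (f v - f u)" by (simp add: algebra_simps)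
    thus ?thesis using s by (simp add: divide_le_eq mult.commute)
  qed
  have ev: "eventually (\<lambda>s. (f (u + s *\<^sub>R w) - f u) / s \<le> f v - f u) (at_right 0)"
    by (rule eventually_mono[OF eventually_at_right_real[of 0 1]]) (use key in auto)
  have "G \<bullet> w \<le> f v - f u"
    using tendsto_le[OF trivial_limit_at_right_real tendsto_const lim ev] .
  thus ?thesis by (simp add: w_def)
qed

lemma descent:
  fixes f :: "real^'n \<Rightarrow> real"
  assumes cX: "convex X" and XU: "X \<subseteq> U" and x1: "x1 \<in> X" and x2: "x2 \<in> X"
    and d: "\<forall>u\<in>U. (f has_derivative (\<lambda>h. G u \<bullet> h)) (at u)"
    and H: "posdef H" and nu: "\<nu> > 0"
    and Lip: "\<forall>a\<in>X. \<forall>b\<in>X. gnorm (matrix_inv H) (G a - G b) \<le> \<nu> * gnorm H (a - b)"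
  shows "f x2 \<le> f x1 + G x1 \<bullet> (x2 - x1) + \<nu> / 2 * qn H (x2 - x1)"
proof -
  define w where "w = x2 - x1"
  define \<psi> where "\<psi> s = f (x1 + s *\<^sub>R w) - s * (G x1 \<bullet> w) - \<nu> / 2 * s^2 * qn H w" for s
  have sym: "symmetric_mat H" using H posdef_def by auto
  have qw: "0 \<le> qn H w" using H unfolding posdef_def
    by (metis order_refl less_imp_le qn_def inner_zero_left)
  have "\<psi> 1 \<le> \<psi> 0"
  proof (rule DERIV_nonpos_imp_nonincreasing[of 0 1 \<psi>], simp)
    fix s :: real assume s: "0 \<le> s" "s \<le> 1"
    have mem: "x1 + s *\<^sub>R w \<in> X"
    proof -
      have "x1 + s *\<^sub>R w = (1 - s) *\<^sub>R x1 + s *\<^sub>R x2" by (simp add: w_def algebra_simps)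
      thus ?thesis using cX x1 x2 s by (simp add: convex_def)
    qed
    have D1: "((\<lambda>s. f (x1 + s *\<^sub>R w)) has_real_derivative (G (x1 + s *\<^sub>R w) \<bullet> w)) (at s)"
      using line_deriv[of f "G (x1 + s *\<^sub>R w)" x1 s w] d mem XU by auto
    have D: "(\<psi> has_real_derivative (G (x1 + s *\<^sub>R w) \<bullet> w - G x1 \<bullet> w - \<nu> * s * qn H w)) (at s)"
      unfolding \<psi>_def[abs_def]
      by (rule derivative_eq_intros D1 refl | simp)+
    define a where "a = G (x1 + s *\<^sub>R w) - G x1"
    have "a \<bullet> w \<le> \<nu> * s * qn H w"
    proof (cases "s = 0")
      case True thus ?thesis by (simp add: a_def)
    next
      case False
      hence sp: "s > 0" using s by simp
      have L: "gnorm (matrix_inv H) a \<le> \<nu> * gnorm H (s *\<^sub>R w)"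
        using Lip mem x1 unfolding a_def by (metis add_diff_cancel_left')
      have "gnorm H (s *\<^sub>R w) = s * sqrt (qn H w)"
        unfolding gnorm_def qn_scale using sp by (simp add: real_sqrt_mult)
      hence L2: "sqrt (qn (matrix_inv H) a) \<le> \<nu> * s * sqrt (qn H w)" using L by (simp add: gnorm_def)
      have nn: "0 \<le> qn (matrix_inv H) a" using qn_Hinv_nonneg[OF H] .
      have "qn (matrix_inv H) a \<le> (\<nu> * s * sqrt (qn H w))^2"
        using L2 nn by (metis real_sqrt_le_iff real_sqrt_unique sqrt_le_D)
      hence Q: "qn (matrix_inv H) a \<le> (\<nu> * s)^2 * qn H w" using qw by (simp add: power_mult_distrib)
      have c: "\<nu> * s / 2 > 0" using nu sp by simp
      have "a \<bullet> w \<le> \<nu> * s / 2 * qn H w + qn (matrix_inv H) a / (4 * (\<nu> * s / 2))"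
        using quad_bound[OF H c, of a w] by simp
      also have "\<dots> \<le> \<nu> * s / 2 * qn H w + (\<nu> * s)^2 * qn H w / (4 * (\<nu> * s / 2))"
        using Q c by (simp add: divide_right_mono)
      also have "\<dots> = \<nu> * s * qn H w" using c by (simp add: field_simps power2_eq_square)
      finally show ?thesis .
    qed
    thus "\<exists>y. (\<psi> has_real_derivative y) (at s) \<and> y \<le> 0"
      using D unfolding a_def by (intro exI[of _ "G (x1 + s *\<^sub>R w) \<bullet> w - G x1 \<bullet> w - \<nu> * s * qn H w"]) (auto simp: inner_diff_left)
  qed
  thus ?thesis unfolding \<psi>_def w_def by simp
qed



lemma obj_expand:
  assumes sH: "symmetric_mat H" and sM: "symmetric_mat M"
  shows "xsub_obj H M \<gamma> c a b (us + s *\<^sub>R v) = xsub_obj H M \<gamma> c a b us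
     + s * (c \<bullet> v + \<gamma> * ((us - a) \<bullet> (H *v v)) + (us - b) \<bullet> (M *v v))
     + s^2 / 2 * (\<gamma> * qn H v + qn M v)"
proof -
  have 1: "qn H (us + s *\<^sub>R v - a) = qn H (us - a) + 2 * s * ((us - a) \<bullet> (H *v v)) + s^2 * qn H v"
    using qn_add[OF sH, of "us - a" "s *\<^sub>R v"] qn_scale[of H s v]
    by (simp add: matrix_vector_mult_scaleR algebra_simps)
  have 2: "qn M (us + s *\<^sub>R v - b) = qn M (us - b) + 2 * s * ((us - b) \<bullet> (M *v v)) + s^2 * qn M v"
    using qn_add[OF sM, of "us - b" "s *\<^sub>R v"] qn_scale[of M s v]
    by (simp add: matrix_vector_mult_scaleR algebra_simps)
  show ?thesis unfolding xsub_obj_def 1 2 by (simp add: algebra_simps inner_add_right)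
qed

lemma prox3:
  assumes cX: "convex X" and sH: "symmetric_mat H" and sM: "symmetric_mat M" and pM: "psd M"
    and pH: "psd H" and g: "\<gamma> \<ge> 0" and us: "us \<in> X"
    and min: "\<forall>u\<in>X. xsub_obj H M \<gamma> c a b us \<le> xsub_obj H M \<gamma> c a b u" and u: "u \<in> X"
  shows "xsub_obj H M \<gamma> c a b us + \<gamma> / 2 * qn H (u - us) + 1/2 * qn M (u - us) \<le> xsub_obj H M \<gamma> c a b u"
proof -
  define v where "v = u - us"
  define L where "L = c \<bullet> v + \<gamma> * ((us - a) \<bullet> (H *v v)) + (us - b) \<bullet> (M *v v)"
  define R where "R = \<gamma> * qn H v + qn M v"
  have R0: "R \<ge> 0" unfolding R_def using psd_nonneg[OF pH] psd_nonneg[OF pM] g by simp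
  have E: "xsub_obj H M \<gamma> c a b (us + s *\<^sub>R v) = xsub_obj H M \<gamma> c a b us + s * L + s^2/2 * R" for s
    using obj_expand[OF sH sM] unfolding L_def R_def by simp
  have pos: "0 \<le> s * L + s^2/2 * R" if s: "0 \<le> s" "s \<le> 1" for s
  proof -
    have "us + s *\<^sub>R v = (1 - s) *\<^sub>R us + s *\<^sub>R u" by (simp add: v_def algebra_simps)
    hence "us + s *\<^sub>R v \<in> X" using cX us u s by (simp add: convex_def)
    thus ?thesis using min E[of s] by force
  qed
  have L0: "L \<ge> 0"
  proof (rule ccontr)
    assume "\<not> L \<ge> 0"
    hence Ln: "L < 0" by simp
    define s where "s = min 1 (- L / (R + 1))"
    have sp: "s > 0" using Ln R0 by (simp add: s_def divide_neg_pos)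
    have s1: "s \<le> 1" by (simp add: s_def)
    have "s \<le> - L / (R + 1)" by (simp add: s_def)
    hence "s * (R + 1) \<le> - L / (R + 1) * (R + 1)" using R0 by (intro mult_right_mono) auto
    hence "s * (R + 1) \<le> - L" using R0 by simp
    hence "s * R \<le> - L" using sp by (simp add: algebra_simps)
    hence "s * (s * R) \<le> s * (- L)" using sp by (intro mult_left_mono) auto
    moreover have "0 \<le> s * L + s^2/2 * R" using pos[of s] sp s1 by simp
    ultimately have "0 \<le> s * L/2" by (simp add: algebra_simps power2_eq_square)
    moreover have "s * L < 0" using sp Ln by (simp add: mult_pos_neg)
    ultimately show False by simp
  qed
  have "xsub_obj H M \<gamma> c a b u = xsub_obj H M \<gamma> c a b us + L + R/2"
    using E[of 1] by (simp add: v_def)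
  moreover have "R/2 = \<gamma>/2 * qn H v + 1/2 * qn M v" unfolding R_def by simp
  ultimately show ?thesis using L0 by (simp add: v_def)
qed



lemma betaT_range: "t \<ge> 1 \<Longrightarrow> 0 \<le> betaT t \<and> betaT t \<le> 1"
  by (simp add: betaT_def)

lemma step_bound:
  fixes f :: "real^'n \<Rightarrow> real" and G :: "real^'n \<Rightarrow> real^'n" and H M :: "real^'n^'n"
  assumes cX: "convex X"
    and conv: "\<forall>u\<in>X. \<forall>v\<in>X. f u + G u \<bullet> (v - u) \<le> f v"
    and desc: "\<forall>u\<in>X. \<forall>v\<in>X. f v \<le> f u + G u \<bullet> (v - u) + \<nu> / 2 * qn H (v - u)"
    and H: "posdef H" and sM: "symmetric_mat M" and pM: "psd M" and nu: "\<nu> > 0"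
    and eta: "0 < \<eta>" "\<eta> < 1 / \<nu>"
    and t: "t \<ge> 1"
    and p: "p \<in> X" and a: "a \<in> X" and q: "q \<in> X" and x: "x \<in> X"
    and opt: "\<forall>u\<in>X. xsub_obj H M (gammaT \<eta> t) (d + hh) a x0 q \<le> xsub_obj H M (gammaT \<eta> t) (d + hh) a x0 u"
    and x': "x' = betaT t *\<^sub>R q + (1 - betaT t) *\<^sub>R p"
    and \<Psi>: "\<And>u. \<Psi> u = f u + hh \<bullet> u + 1/2 * qn M (u - x0) + 1/2 * qn M (x - u)"
  shows "real t * (real t + 1) / 2 * (\<Psi> x' - \<Psi> x)
    \<le> (real t - 1) * real t / 2 * (\<Psi> p - \<Psi> x)
       + (1 / \<eta>) * (qn H (x - a) - qn H (x - q))
       + real t * ((G (betaT t *\<^sub>R a + (1 - betaT t) *\<^sub>R p) - d) \<bullet> (a - x))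
       + \<eta> / (4 * (1 - \<eta> * \<nu>)) * ((real t)^2 * qn (matrix_inv H) (G (betaT t *\<^sub>R a + (1 - betaT t) *\<^sub>R p) - d))"
proof -
  define T where "T = real t"
  define b where "b = betaT t"
  define \<gamma> where "\<gamma> = gammaT \<eta> t"
  define xh where "xh = b *\<^sub>R a + (1 - b) *\<^sub>R p"
  define g where "g = G xh"
  define \<delta> where "\<delta> = g - d"
  define \<Delta> where "\<Delta> = q - a"
  define \<phi> where "\<phi> u = hh \<bullet> u + 1/2 * qn M (u - x0) + 1/2 * qn M (x - u)" for u
  define c where "c = (1 - \<eta> * \<nu>) / (T * \<eta>)"
  have T1: "T \<ge> 1" using t by (simp add: T_def)
  have b: "0 \<le> b" "b \<le> 1" using betaT_range[OF t] by (auto simp: b_def)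
  have bT: "b = 2 / (T + 1)" by (simp add: b_def betaT_def T_def)
  have gT: "\<gamma> = 2 / (T * \<eta>)" by (simp add: \<gamma>_def gammaT_def T_def)
  have en: "\<eta> * \<nu> < 1" using eta nu by (simp add: field_simps)
  have cpos: "c > 0" unfolding c_def using en T1 eta by simp
  have sH: "symmetric_mat H" and pH: "psd H" using H by (auto simp: posdef_def psd_def qn_def
      intro: less_imp_le) (metis order_refl less_imp_le inner_zero_left)
  have xh: "xh \<in> X" unfolding xh_def using cX a p b by (simp add: convex_def)
  have x'X: "x' \<in> X" unfolding x' b_def[symmetric] using cX q p b by (simp add: convex_def)
  have d1: "f x' \<le> f xh + g \<bullet> (x' - xh) + \<nu> / 2 * qn H (x' - xh)"
    using desc xh x'X unfolding g_def by blast
  have vx: "x' - xh = b *\<^sub>R \<Delta>" unfolding x' b_def[symmetric] xh_def \<Delta>_def by (simp add: algebra_simps)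
  have vx2: "x' - xh = (1 - b) *\<^sub>R (p - xh) + b *\<^sub>R (q - xh)"
    unfolding x' b_def[symmetric] by (simp add: algebra_simps)
  have d2: "f x' \<le> f xh + (1 - b) * (g \<bullet> (p - xh)) + b * (g \<bullet> (q - xh)) + \<nu> / 2 * b^2 * qn H \<Delta>"
  proof -
    have "g \<bullet> (x' - xh) = (1 - b) * (g \<bullet> (p - xh)) + b * (g \<bullet> (q - xh))"
      unfolding vx2 by (simp add: inner_add_right)
    moreover have "qn H (x' - xh) = b^2 * qn H \<Delta>" unfolding vx by (rule qn_scale)
    ultimately show ?thesis using d1 by simp
  qed
  have c1: "(1 - b) * (f xh + g \<bullet> (p - xh)) \<le> (1 - b) * f p"
    using conv xh p b unfolding g_def by (intro mult_left_mono) auto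
  have c2: "f xh + g \<bullet> (x - xh) \<le> f x" using conv xh x unfolding g_def by blast
  have gq: "g \<bullet> (q - xh) = g \<bullet> (x - xh) + d \<bullet> (q - x) + \<delta> \<bullet> (a - x) + \<delta> \<bullet> \<Delta>"
    unfolding \<delta>_def \<Delta>_def by (simp add: algebra_simps inner_diff_left inner_diff_right)
  have ph: "\<phi> x' \<le> (1 - b) * \<phi> p + b * \<phi> q"
  proof -
    have e: "x' - x0 = b *\<^sub>R (q - x0) + (1 - b) *\<^sub>R (p - x0)"
      unfolding x' b_def[symmetric] by (simp add: algebra_simps)
    have "qn M (x' - x0) \<le> b * qn M (q - x0) + (1 - b) * qn M (p - x0)"
      unfolding e by (rule qn_convex[OF sM pM b])
    moreover have e2: "x - x' = b *\<^sub>R (x - q) + (1 - b) *\<^sub>R (x - p)"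
      unfolding x' b_def[symmetric] by (simp add: algebra_simps)
    have "qn M (x - x') \<le> b * qn M (x - q) + (1 - b) * qn M (x - p)"
      unfolding e2 by (rule qn_convex[OF sM pM b])
    moreover have "hh \<bullet> x' = b * (hh \<bullet> q) + (1 - b) * (hh \<bullet> p)" unfolding x' b_def by (simp add: inner_add_right)
    ultimately show ?thesis unfolding \<phi>_def by (simp add: algebra_simps; (simp add: field_simps)?; linarith?)
  qed
  have pr: "xsub_obj H M \<gamma> (d + hh) a x0 q + \<gamma> / 2 * qn H (x - q) + 1/2 * qn M (x - q) \<le> xsub_obj H M \<gamma> (d + hh) a x0 x"
  proof -
    have "\<gamma> \<ge> 0" using gT eta T1 by simp
    thus ?thesis using prox3[OF cX sH sM pM pH _ q _ x] opt unfolding \<gamma>_def by blast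
  qed
  hence pr2: "d \<bullet> (q - x) + \<phi> q \<le> \<phi> x + \<gamma> / 2 * (qn H (x - a) - qn H (x - q) - qn H \<Delta>)"
    unfolding xsub_obj_def \<phi>_def \<Delta>_def by (simp add: algebra_simps inner_diff_right qn_def)
  have qb: "\<delta> \<bullet> \<Delta> - c * qn H \<Delta> \<le> qn (matrix_inv H) \<delta> / (4 * c)" by (rule quad_bound[OF H cpos])
  have cg: "c \<le> \<gamma> / 2 - \<nu> * b / 2"
  proof -
    have Tp: "T > 0" "T + 1 > 0" using T1 by auto
    have 1: "\<nu> / (T + 1) \<le> \<nu> / T" using nu T1 by (intro divide_left_mono) auto
    have 2: "c = 1 / (T * \<eta>) - \<nu> / T" unfolding c_def using eta T1 by (simp add: field_simps)
    have 3: "\<gamma> / 2 = 1 / (T * \<eta>)" unfolding gT by simp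
    have 4: "\<nu> * b / 2 = \<nu> / (T + 1)" unfolding bT using Tp by (simp add: field_simps)
    show ?thesis using 1 2 3 4 by linarith
  qed
  have qH: "0 \<le> qn H \<Delta>" using pH psd_def by auto
  have qb2: "\<delta> \<bullet> \<Delta> - (\<gamma> / 2 - \<nu> * b / 2) * qn H \<Delta> \<le> qn (matrix_inv H) \<delta> / (4 * c)"
    using qb mult_right_mono[OF cg qH] by linarith
  define K where "K = f x + \<phi> x + \<gamma> / 2 * (qn H (x - a) - qn H (x - q)) + \<delta> \<bullet> (a - x) + qn (matrix_inv H) \<delta> / (4 * c)"
  have inner: "f xh + g \<bullet> (q - xh) + \<phi> q + \<nu> / 2 * b * qn H \<Delta> \<le> K"
    using c2 gq pr2 qb2 unfolding K_def by (simp add: algebra_simps; (simp add: field_simps)?; linarith?)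
  have "f x' + \<phi> x' \<le> (1 - b) * (f p + \<phi> p) + b * K"
  proof -
    have "b * (f xh + g \<bullet> (q - xh) + \<phi> q + \<nu> / 2 * b * qn H \<Delta>) \<le> b * K"
      using inner b by (intro mult_left_mono) auto
    thus ?thesis using d2 c1 ph by (simp add: algebra_simps power2_eq_square; (simp add: field_simps)?; linarith?)
  qed
  hence main: "\<Psi> x' \<le> (1 - b) * \<Psi> p + b * K" unfolding \<Psi> \<phi>_def by (simp add: algebra_simps)
  have A: "T * (T + 1) / 2 * \<Psi> x' \<le> T * (T + 1) / 2 * ((1 - b) * \<Psi> p + b * K)"
    using main T1 by (intro mult_left_mono) auto
  have B: "T * (T + 1) / 2 * ((1 - b) * \<Psi> p + b * K) = (T * (T + 1) / 2 * (1 - b)) * \<Psi> p + (T * (T + 1) / 2 * b) * K"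
    by (simp only: distrib_left mult.assoc)
  have C: "T * (T + 1) / 2 * (1 - b) = (T - 1) * T / 2" unfolding bT using T1 by (simp add: field_simps)
  have D: "T * (T + 1) / 2 * b = T" unfolding bT using T1 by (simp add: field_simps)
  have E: "T * K = T * (f x + \<phi> x) + (1 / \<eta>) * (qn H (x - a) - qn H (x - q)) + T * (\<delta> \<bullet> (a - x))
      + \<eta> / (4 * (1 - \<eta> * \<nu>)) * (T^2 * qn (matrix_inv H) \<delta>)"
    unfolding K_def gT c_def using T1 eta en by (simp add: field_simps power2_eq_square)
  have F: "T * (T + 1) / 2 * \<Psi> x' \<le> (T - 1) * T / 2 * \<Psi> p + T * K"
    using A unfolding B C D .
  have G: "\<Psi> x = f x + \<phi> x" unfolding \<Psi> \<phi>_def by simp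
  have "T * (T + 1) / 2 * (\<Psi> x' - \<Psi> x) \<le> (T - 1) * T / 2 * (\<Psi> p - \<Psi> x) + (1 / \<eta>) * (qn H (x - a) - qn H (x - q)) + T * (\<delta> \<bullet> (a - x))
      + \<eta> / (4 * (1 - \<eta> * \<nu>)) * (T^2 * qn (matrix_inv H) \<delta>)"
  proof -
    have "T * (T + 1) / 2 * (\<Psi> x' - \<Psi> x) = T * (T + 1) / 2 * \<Psi> x' - T * (T + 1) / 2 * \<Psi> x"
      by (rule right_diff_distrib)
    moreover have "(T - 1) * T / 2 * (\<Psi> p - \<Psi> x) = (T - 1) * T / 2 * \<Psi> p - (T - 1) * T / 2 * \<Psi> x"
      by (rule right_diff_distrib)
    moreover have "T * (T + 1) / 2 * \<Psi> x = (T - 1) * T / 2 * \<Psi> x + T * (f x + \<phi> x)"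
      unfolding G by (simp add: field_simps)
    ultimately show ?thesis using F E by linarith
  qed
  thus ?thesis unfolding T_def \<delta>_def g_def xh_def b_def .
qed



lemma xsub_bound:
  fixes f :: "real^'n \<Rightarrow> real" and G :: "real^'n \<Rightarrow> real^'n" and H M :: "real^'n^'n"
  assumes cX: "convex X"
    and conv: "\<forall>u\<in>X. \<forall>v\<in>X. f u + G u \<bullet> (v - u) \<le> f v"
    and desc: "\<forall>u\<in>X. \<forall>v\<in>X. f v \<le> f u + G u \<bullet> (v - u) + \<nu> / 2 * qn H (v - u)"
    and H: "posdef H" and sM: "symmetric_mat M" and pM: "psd M" and nu: "\<nu> > 0"
    and eta: "0 < \<eta>" "\<eta> < 1 / \<nu>"
    and x0: "xs 1 = x0"
    and mem: "\<forall>t\<in>{1..m+1}. xs t \<in> X \<and> xbs t \<in> X"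
    and step: "\<forall>t\<in>{1..m}. (\<forall>u\<in>X. xsub_obj H M (gammaT \<eta> t) (d t + hh) (xbs t) x0 (xbs (Suc t))
                 \<le> xsub_obj H M (gammaT \<eta> t) (d t + hh) (xbs t) x0 u)
              \<and> xs (Suc t) = betaT t *\<^sub>R xbs (Suc t) + (1 - betaT t) *\<^sub>R xs t"
    and m: "m \<ge> 1" and x: "x \<in> X"
  shows "f x - f (xs (m+1)) + (x - xs (m+1)) \<bullet> (hh + M *v (xs (m+1) - x0))
     \<ge> zeta H \<nu> \<eta> m (xbs 1) (xbs (m+1)) (\<lambda>t. G (xhat xs xbs t) - d t) xbs x"
proof -
  define \<Psi> where "\<Psi> u = f u + hh \<bullet> u + 1/2 * qn M (u - x0) + 1/2 * qn M (x - u)" for u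
  define \<delta> where "\<delta> t = G (xhat xs xbs t) - d t" for t
  define S where "S n = (1/\<eta>) * (qn H (x - xbs 1) - qn H (x - xbs (n+1)))
     + (\<Sum>t=1..n. real t * (\<delta> t \<bullet> (xbs t - x)))
     + \<eta> / (4 * (1 - \<eta> * \<nu>)) * (\<Sum>t=1..n. (real t)^2 * qn (matrix_inv H) (\<delta> t))" for n
  have per: "real t * (real t + 1) / 2 * (\<Psi> (xs (Suc t)) - \<Psi> x)
    \<le> (real t - 1) * real t / 2 * (\<Psi> (xs t) - \<Psi> x)
       + (1 / \<eta>) * (qn H (x - xbs t) - qn H (x - xbs (Suc t)))
       + real t * (\<delta> t \<bullet> (xbs t - x))
       + \<eta> / (4 * (1 - \<eta> * \<nu>)) * ((real t)^2 * qn (matrix_inv H) (\<delta> t))"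
    if t: "t \<in> {1..m}" for t
  proof -
    have t1: "t \<ge> 1" using t by simp
    have memt: "xs t \<in> X" "xbs t \<in> X" "xbs (Suc t) \<in> X" using mem t by auto
    have st: "(\<forall>u\<in>X. xsub_obj H M (gammaT \<eta> t) (d t + hh) (xbs t) x0 (xbs (Suc t))
                 \<le> xsub_obj H M (gammaT \<eta> t) (d t + hh) (xbs t) x0 u)"
         "xs (Suc t) = betaT t *\<^sub>R xbs (Suc t) + (1 - betaT t) *\<^sub>R xs t" using step t by auto
    show ?thesis
      using step_bound[OF cX conv desc H sM pM nu eta t1 memt(1) memt(2) memt(3) x st(1) st(2), of \<Psi>]
      unfolding \<delta>_def xhat_def \<Psi>_def by simp
  qed
  have ind: "n \<le> m \<Longrightarrow> real n * (real n + 1) / 2 * (\<Psi> (xs (n+1)) - \<Psi> x) \<le> S n" for n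
  proof (induction n)
    case 0 thus ?case by (simp add: S_def)
  next
    case (Suc n)
    have IH: "real n * (real n + 1) / 2 * (\<Psi> (xs (n+1)) - \<Psi> x) \<le> S n" using Suc by simp
    have P: "real (Suc n) * (real (Suc n) + 1) / 2 * (\<Psi> (xs (Suc (Suc n))) - \<Psi> x)
      \<le> (real (Suc n) - 1) * real (Suc n) / 2 * (\<Psi> (xs (Suc n)) - \<Psi> x)
       + (1 / \<eta>) * (qn H (x - xbs (Suc n)) - qn H (x - xbs (Suc (Suc n))))
       + real (Suc n) * (\<delta> (Suc n) \<bullet> (xbs (Suc n) - x))
       + \<eta> / (4 * (1 - \<eta> * \<nu>)) * ((real (Suc n))^2 * qn (matrix_inv H) (\<delta> (Suc n)))"
      using per[of "Suc n"] Suc.prems by simp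
    have e1: "(real (Suc n) - 1) * real (Suc n) / 2 = real n * (real n + 1) / 2" by simp
    have S: "S (Suc n) = S n + (1 / \<eta>) * (qn H (x - xbs (Suc n)) - qn H (x - xbs (Suc (Suc n))))
       + real (Suc n) * (\<delta> (Suc n) \<bullet> (xbs (Suc n) - x))
       + \<eta> / (4 * (1 - \<eta> * \<nu>)) * ((real (Suc n))^2 * qn (matrix_inv H) (\<delta> (Suc n)))"
      unfolding S_def by (simp add: algebra_simps)
    show ?case using P IH unfolding e1 S by simp
  qed
  have fin: "real m * (real m + 1) / 2 * (\<Psi> (xs (m+1)) - \<Psi> x) \<le> S m" using ind by simp
  have mp: "real m * (real m + 1) > 0" using m by simp
  have z: "zeta H \<nu> \<eta> m (xbs 1) (xbs (m+1)) \<delta> xbs x = - (2 / (real m * (real m + 1))) * S m"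
    unfolding zeta_def S_def by (simp add: algebra_simps)
  have "\<Psi> (xs (m+1)) - \<Psi> x \<le> 2 / (real m * (real m + 1)) * S m"
  proof -
    have "2 / (real m * (real m + 1)) * (real m * (real m + 1) / 2 * (\<Psi> (xs (m+1)) - \<Psi> x))
        \<le> 2 / (real m * (real m + 1)) * S m"
      using fin mp by (intro mult_left_mono) auto
    moreover have "2 / (real m * (real m + 1)) * (real m * (real m + 1) / 2 * (\<Psi> (xs (m+1)) - \<Psi> x))
       = \<Psi> (xs (m+1)) - \<Psi> x" using mp by (simp add: field_simps)
    ultimately show ?thesis by simp
  qed
  hence Z: "\<Psi> x - \<Psi> (xs (m+1)) \<ge> zeta H \<nu> \<eta> m (xbs 1) (xbs (m+1)) \<delta> xbs x" unfolding z by simp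
  define x1 where "x1 = xs (m+1)"
  have q: "qn M (x - x0) = qn M (x - x1) + 2 * ((x - x1) \<bullet> (M *v (x1 - x0))) + qn M (x1 - x0)"
    using qn_add[OF sM, of "x - x1" "x1 - x0"] by simp
  have "\<Psi> x - \<Psi> x1 = f x - f x1 + (x - x1) \<bullet> (hh + M *v (x1 - x0))"
  proof -
    have q0: "qn M (x - x) = 0" by (simp add: qn_def)
    have l: "(x - x1) \<bullet> (hh + M *v (x1 - x0)) = hh \<bullet> x - hh \<bullet> x1 + (x - x1) \<bullet> (M *v (x1 - x0))"
      by (simp add: inner_add_right inner_diff_left inner_diff_right inner_commute)
    show ?thesis unfolding \<Psi>_def l using q q0 by linarith
  qed
  thus ?thesis using Z unfolding x1_def \<delta>_def by simp
qed



lemma limit_arg: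
  fixes X R :: real
  assumes h: "\<And>s. 0 < s \<Longrightarrow> s \<le> 1 \<Longrightarrow> 0 \<le> X + s * R"
  shows "0 \<le> X"
proof (rule ccontr)
  assume "\<not> 0 \<le> X"
  hence Xn: "X < 0" by simp
  define s where "s = min 1 (- X / (2 * (\<bar>R\<bar> + 1)))"
  have d: "2 * (\<bar>R\<bar> + 1) > 0" by simp
  have sp: "s > 0" using Xn d by (simp add: s_def divide_neg_pos)
  have "s \<le> - X / (2 * (\<bar>R\<bar> + 1))" by (simp add: s_def)
  hence "s * (2 * (\<bar>R\<bar> + 1)) \<le> - X / (2 * (\<bar>R\<bar> + 1)) * (2 * (\<bar>R\<bar> + 1))"
    using d by (intro mult_right_mono) auto
  hence "s * (2 * (\<bar>R\<bar> + 1)) \<le> - X" using d by simp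
  moreover have "s * R \<le> s * \<bar>R\<bar>" using sp by (intro mult_left_mono) auto
  moreover have "0 \<le> X + s * R" using h[of s] sp by (simp add: s_def)
  ultimately show False using sp Xn by (simp add: algebra_simps) 
qed

lemma norm_sq_expand: "(norm (v + w :: 'a::real_inner))^2 = (norm v)^2 + 2 * (v \<bullet> w) + (norm w)^2"
  by (simp add: power2_norm_eq_inner inner_add_left inner_add_right inner_commute)

lemma block_opt:
  fixes g :: "real^'n \<Rightarrow> ereal" and B :: "real^'n^'m" and L :: "real^'n^'n"
  assumes cY: "convex Y" and pcc: "proper_closed_convex Y g" and sL: "symmetric_mat L"
    and yt: "yt \<in> Y"
    and min: "\<forall>u\<in>Y. g yt + ereal (\<beta> / 2 * (norm (B *v yt + r))^2 + 1/2 * qn L (yt - y0))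
                 \<le> g u + ereal (\<beta> / 2 * (norm (B *v u + r))^2 + 1/2 * qn L (u - y0))"
  shows "\<exists>gy. g yt = ereal gy \<and> (\<forall>u\<in>Y. ereal (gy - (u - yt) \<bullet> (\<beta> *\<^sub>R (transpose B *v (B *v yt + r)) + L *v (yt - y0))) \<le> g u)"
proof -
  define q where "q v = \<beta> / 2 * (norm (B *v v + r))^2 + 1/2 * qn L (v - y0)" for v
  define Dq where "Dq = \<beta> *\<^sub>R (transpose B *v (B *v yt + r)) + L *v (yt - y0)"
  have ninf: "\<forall>u\<in>Y. g u \<noteq> - \<infinity>" and ex: "\<exists>u\<in>Y. g u \<noteq> \<infinity>"
    and cvx: "\<forall>y1\<in>Y. \<forall>y2\<in>Y. \<forall>u::real. 0 \<le> u \<and> u \<le> 1 \<longrightarrow>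
        g (u *\<^sub>R y1 + (1 - u) *\<^sub>R y2) \<le> ereal u * g y1 + ereal (1 - u) * g y2"
    using pcc unfolding proper_closed_convex_def by auto
  have min': "\<forall>u\<in>Y. g yt + ereal (q yt) \<le> g u + ereal (q u)" using min unfolding q_def by simp
  obtain u0 where u0: "u0 \<in> Y" "g u0 \<noteq> \<infinity>" using ex by blast
  have "g yt \<noteq> \<infinity>"
  proof
    assume "g yt = \<infinity>"
    hence "g u0 + ereal (q u0) = \<infinity>" using min' u0 by (metis ereal_infty_less_eq(1) plus_ereal.simps(2))
    thus False using u0 ninf by (cases "g u0") auto
  qed
  moreover have "g yt \<noteq> - \<infinity>" using ninf yt by auto
  ultimately obtain gy where gy: "g yt = ereal gy" by (cases "g yt") auto
  have expand: "q (yt + s *\<^sub>R (u - yt)) = q yt + s * ((u - yt) \<bullet> Dq)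
      + s^2 * (\<beta> / 2 * (norm (B *v (u - yt)))^2 + 1/2 * qn L (u - yt))" for s u
  proof -
    have 1: "B *v (yt + s *\<^sub>R (u - yt)) + r = (B *v yt + r) + s *\<^sub>R (B *v (u - yt))"
      by (simp add: matrix_vector_right_distrib matrix_vector_mult_scaleR algebra_simps)
    have 2: "yt + s *\<^sub>R (u - yt) - y0 = (yt - y0) + s *\<^sub>R (u - yt)" by (simp add: algebra_simps)
    have 3: "(B *v yt + r) \<bullet> (B *v (u - yt)) = (u - yt) \<bullet> (transpose B *v (B *v yt + r))"
      by (metis dot_transpose inner_commute)
    have 4: "(yt - y0) \<bullet> (L *v (u - yt)) = (u - yt) \<bullet> (L *v (yt - y0))"
      using sym_dot[OF sL] by simp
    have 5: "(norm ((B *v yt + r) + s *\<^sub>R (B *v (u - yt))))^2 = (norm (B *v yt + r))^2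
        + 2 * s * ((B *v yt + r) \<bullet> (B *v (u - yt))) + s^2 * (norm (B *v (u - yt)))^2"
      unfolding norm_sq_expand by (simp add: power_mult_distrib)
    have 6: "qn L ((yt - y0) + s *\<^sub>R (u - yt)) = qn L (yt - y0) + 2 * s * ((yt - y0) \<bullet> (L *v (u - yt))) + s^2 * qn L (u - yt)"
      unfolding qn_add[OF sL] qn_scale by (simp add: matrix_vector_mult_scaleR)
    have 7: "(u - yt) \<bullet> Dq = \<beta> * ((u - yt) \<bullet> (transpose B *v (B *v yt + r))) + (u - yt) \<bullet> (L *v (yt - y0))"
      unfolding Dq_def by (simp add: inner_add_right)
    show ?thesis unfolding q_def 1 2 5 6 7 3 4 by (simp add: field_simps)
  qed
  have "ereal (gy - (u - yt) \<bullet> Dq) \<le> g u" if u: "u \<in> Y" for u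
  proof (cases "g u")
    case PInf thus ?thesis by simp
  next
    case MInf thus ?thesis using ninf u by simp
  next
    case (real gu)
    define R where "R = \<beta> / 2 * (norm (B *v (u - yt)))^2 + 1/2 * qn L (u - yt)"
    have "0 \<le> (gu - gy + (u - yt) \<bullet> Dq) + s * R" if s: "0 < s" "s \<le> 1" for s
    proof -
      have e: "yt + s *\<^sub>R (u - yt) = s *\<^sub>R u + (1 - s) *\<^sub>R yt" by (simp add: algebra_simps)
      have mem: "yt + s *\<^sub>R (u - yt) \<in> Y" unfolding e using cY u yt s by (simp add: convex_def)
      have "g (yt + s *\<^sub>R (u - yt)) \<le> ereal s * g u + ereal (1 - s) * g yt"
        unfolding e using cvx u yt s by auto
      hence gs: "g (yt + s *\<^sub>R (u - yt)) \<le> ereal (s * gu + (1 - s) * gy)" using real gy by simp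
      have "g yt + ereal (q yt) \<le> g (yt + s *\<^sub>R (u - yt)) + ereal (q (yt + s *\<^sub>R (u - yt)))"
        using min' mem by blast
      also have "\<dots> \<le> ereal (s * gu + (1 - s) * gy) + ereal (q (yt + s *\<^sub>R (u - yt)))"
        using gs by (rule add_right_mono)
      finally have "gy + q yt \<le> s * gu + (1 - s) * gy + q (yt + s *\<^sub>R (u - yt))" using gy by simp
      hence "0 \<le> s * (gu - gy + (u - yt) \<bullet> Dq + s * R)"
        unfolding expand R_def by (simp add: algebra_simps power2_eq_square)
      thus ?thesis using s by (simp add: zero_le_mult_iff)
    qed
    hence "0 \<le> gu - gy + (u - yt) \<bullet> Dq" by (rule limit_arg)
    thus ?thesis using real by simp
  qed
  thus ?thesis using gy unfolding Dq_def by blast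
qed


lemma avg_eq:
  "fbar N fj u + gradf N gj u \<bullet> w = (1 / real N) * (\<Sum>j=1..N. fj j u + gj j u \<bullet> w)"
  by (simp add: fbar_def gradf_def inner_sum_left sum.distrib distrib_left)

lemma avg_eq2:
  "fbar N fj u + gradf N gj u \<bullet> w + c = (1 / real N) * (\<Sum>j=1..N. fj j u + gj j u \<bullet> w + c)" if "N \<ge> 1"
proof -
  have "(\<Sum>j=1..N. fj j u + gj j u \<bullet> w + c) = (\<Sum>j=1..N. fj j u + gj j u \<bullet> w) + real N * c"
    by (simp add: sum.distrib)
  thus ?thesis using that avg_eq[of N fj u gj w] by (simp add: distrib_left)
qed

lemma inner_mem:
  fixes X :: "(real^'n) set"
  assumes cX: "convex X" and s1: "xs 1 \<in> X" "xbs 1 \<in> X"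
    and st: "\<forall>t\<in>{1..m}. xbs (Suc t) \<in> X \<and> xs (Suc t) = betaT t *\<^sub>R xbs (Suc t) + (1 - betaT t) *\<^sub>R xs t"
  shows "\<forall>t\<in>{1..m+1}. xs t \<in> X \<and> xbs t \<in> X"
proof -
  have "1 \<le> t \<longrightarrow> t \<le> m + 1 \<longrightarrow> xs t \<in> X \<and> xbs t \<in> X" for t
  proof (induction t)
    case 0 show ?case by simp
  next
    case (Suc t)
    show ?case
    proof (cases "t = 0")
      case True thus ?thesis using s1 by simp
    next
      case False
      show ?thesis
      proof (intro impI)
        assume "1 \<le> Suc t" "Suc t \<le> m + 1"
        hence t: "t \<in> {1..m}" using False by auto
        have "xs t \<in> X" using Suc.IH t by auto
        moreover have "xbs (Suc t) \<in> X" "xs (Suc t) = betaT t *\<^sub>R xbs (Suc t) + (1 - betaT t) *\<^sub>R xs t"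
          using st t by auto
        moreover have "0 \<le> betaT t" "betaT t \<le> 1" using betaT_range[of t] t by auto
        ultimately show "xs (Suc t) \<in> X \<and> xbs (Suc t) \<in> X" using cX
          by (metis convex_def add_diff_cancel_left' diff_add_cancel diff_ge_0_iff_ge)
      qed
    qed
  qed
  thus ?thesis by auto
qed

lemma qn_diff_mat: "qn (P - c *\<^sub>R R) v = qn P v - c * qn R v"
  by (simp add: qn_def matrix_vector_mult_diff_rdistrib scaleR_matrix_vector_assoc[symmetric] inner_diff_right)

lemma qn_AtA: "qn (transpose A ** A) v = (norm (A *v (v::real^'n)))^2"
  by (simp add: qn_def matrix_vector_mul_assoc[symmetric] power2_norm_eq_inner dot_transpose[of A, symmetric] inner_commute)

theorem theorem4p5:
  fixes X :: "(real^'n1) set" and Y :: "(real^'n2) set" and Z :: "(real^'n3) set"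
    and A :: "real^'n1^'m" and B :: "real^'n2^'m" and C :: "real^'n3^'m" and b :: "real^'m"
    and g :: "real^'n2 \<Rightarrow> ereal" and l :: "real^'n3 \<Rightarrow> ereal"
    and N :: nat and fj :: "nat \<Rightarrow> real^'n1 \<Rightarrow> real" and gj :: "nat \<Rightarrow> real^'n1 \<Rightarrow> real^'n1"
    and U :: "(real^'n1) set"
    and H :: "real^'n1^'n1" and \<nu> :: real
    and \<beta> \<tau> s :: real and L1 :: "real^'n2^'n2" and L2 :: "real^'n3^'n3"
    and x xb :: "nat \<Rightarrow> real^'n1" and y :: "nat \<Rightarrow> real^'n2" and z :: "nat \<Rightarrow> real^'n3"
    and lam :: "nat \<Rightarrow> real^'m"
    and m :: "nat \<Rightarrow> nat" and \<eta> :: "nat \<Rightarrow> real" and M :: "nat \<Rightarrow> real^'n1^'n1"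
    and xin xbin :: "nat \<Rightarrow> nat \<Rightarrow> real^'n1" and \<xi> :: "nat \<Rightarrow> nat \<Rightarrow> nat"
    and e :: "nat \<Rightarrow> nat \<Rightarrow> real^'n1"
    and k :: nat
  assumes X: "X \<noteq> {}" "closed X" "convex X"
    and Y: "Y \<noteq> {}" "closed Y" "convex Y"
    and Z: "Z \<noteq> {}" "closed Z" "convex Z"
    and g: "proper_closed_convex Y g" and l: "proper_closed_convex Z l"
    and N: "N \<ge> 1"
    and U: "open U" "X \<subseteq> U"
    and fj_deriv: "\<forall>j\<in>{1..N}. \<forall>u\<in>U. (fj j has_derivative (\<lambda>h. gj j u \<bullet> h)) (at u)"
    and gj_cont: "\<forall>j\<in>{1..N}. continuous_on U (gj j)"
    and fj_convex: "\<forall>j\<in>{1..N}. convex_on X (fj j)"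
    and H: "posdef H" and \<nu>: "\<nu> > 0"
    and Lip: "\<forall>j\<in>{1..N}. \<forall>x1\<in>X. \<forall>x2\<in>X.
                gnorm (matrix_inv H) (gj j x1 - gj j x2) \<le> \<nu> * gnorm H (x1 - x2)"
    and \<beta>: "\<beta> > 0" and \<tau>s: "(\<tau>, s) \<in> Delta"
    and L: "symmetric_mat L1" "symmetric_mat L2"
    and init: "x 0 \<in> X" "y 0 \<in> Y" "z 0 \<in> Z" "xb 0 = x 0"
    and params: "\<forall>i. m i \<ge> 1 \<and> \<eta> i > 0 \<and> symmetric_mat (M i)
                    \<and> psd (M i - \<beta> *\<^sub>R (transpose A ** A))"
    and inner_init: "\<forall>i. xin i 1 = x i \<and> xbin i 1 = xb i"
    and inner_step: "\<forall>i. \<forall>t\<in>{1..m i}.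
        \<xi> i t \<in> {1..N} \<and>
        xbin i (Suc t) \<in> X \<and>
        (\<forall>u\<in>X. xsub_obj H (M i) (gammaT (\<eta> i) t)
                   (gj (\<xi> i t) (xhat (xin i) (xbin i) t) + e i t
                    - (transpose A *v (lam i - \<beta> *\<^sub>R (A *v x i + B *v y i + C *v z i - b))))
                   (xbin i t) (x i) (xbin i (Suc t))
                 \<le> xsub_obj H (M i) (gammaT (\<eta> i) t)
                   (gj (\<xi> i t) (xhat (xin i) (xbin i) t) + e i t
                    - (transpose A *v (lam i - \<beta> *\<^sub>R (A *v x i + B *v y i + C *v z i - b))))
                   (xbin i t) (x i) u) \<and>
        xin i (Suc t) = betaT t *\<^sub>R xbin i (Suc t) + (1 - betaT t) *\<^sub>R xin i t"
    and outer_x: "\<forall>i. x (Suc i) = xin i (m i + 1) \<and> xb (Suc i) = xbin i (m i + 1)"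
    and outer_y: "\<forall>i. y (Suc i) \<in> Y \<and>
        (\<forall>u\<in>Y. g (y (Suc i)) + ereal (\<beta> / 2 * (norm (A *v x (Suc i) + B *v y (Suc i) + C *v z i - b
                   - (1 / \<beta>) *\<^sub>R (lam i - (\<tau> * \<beta>) *\<^sub>R (A *v x (Suc i) + B *v y i + C *v z i - b))))^2
                   + 1/2 * qn L1 (y (Suc i) - y i))
              \<le> g u + ereal (\<beta> / 2 * (norm (A *v x (Suc i) + B *v u + C *v z i - b
                   - (1 / \<beta>) *\<^sub>R (lam i - (\<tau> * \<beta>) *\<^sub>R (A *v x (Suc i) + B *v y i + C *v z i - b))))^2
                   + 1/2 * qn L1 (u - y i)))"
    and outer_z: "\<forall>i. z (Suc i) \<in> Z \<and>
        (\<forall>u\<in>Z. l (z (Suc i)) + ereal (\<beta> / 2 * (norm (A *v x (Suc i) + B *v y i + C *v z (Suc i) - b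
                   - (1 / \<beta>) *\<^sub>R (lam i - (\<tau> * \<beta>) *\<^sub>R (A *v x (Suc i) + B *v y i + C *v z i - b))))^2
                   + 1/2 * qn L2 (z (Suc i) - z i))
              \<le> l u + ereal (\<beta> / 2 * (norm (A *v x (Suc i) + B *v y i + C *v u - b
                   - (1 / \<beta>) *\<^sub>R (lam i - (\<tau> * \<beta>) *\<^sub>R (A *v x (Suc i) + B *v y i + C *v z i - b))))^2
                   + 1/2 * qn L2 (u - z i)))"
    and outer_lam: "\<forall>i. lam (Suc i) =
        (lam i - (\<tau> * \<beta>) *\<^sub>R (A *v x (Suc i) + B *v y i + C *v z i - b))
        - (s * \<beta>) *\<^sub>R (A *v x (Suc i) + B *v y (Suc i) + C *v z (Suc i) - b)"
    and \<eta>k: "0 < \<eta> k" "\<eta> k < 1 / \<nu>"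
  shows "\<forall>w \<in> X \<times> Y \<times> Z \<times> UNIV.
     (let wk = (x k, y k, z k, lam k);
          wt = (x (Suc k), y (Suc k), z (Suc k),
                lam k - \<beta> *\<^sub>R (A *v x (Suc k) + B *v y k + C *v z k - b));
          \<delta> = (\<lambda>t. gradf N gj (xhat (xin k) (xbin k) t)
                   - (gj (\<xi> k t) (xhat (xin k) (xbin k) t) + e k t))
      in Fobj (fbar N fj) g l w - Fobj (fbar N fj) g l wt + ereal ((w - wt) \<bullet> Jop A B C b w)
         \<ge> ereal ((w - wt) \<bullet> Qmul (M k - \<beta> *\<^sub>R (transpose A ** A)) L1 L2 B C \<beta> \<tau> (wk - wt)
                  + zeta H \<nu> (\<eta> k) (m k) (xb k) (xb (Suc k)) \<delta> (xbin k) (fst w)))"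
proof -
  have cX: "convex X" using X by simp
  have memk: "x i \<in> X \<and> xb i \<in> X" for i
  proof (induction i)
    case 0 show ?case using init by simp
  next
    case (Suc i)
    have "\<forall>t\<in>{1..m i+1}. xin i t \<in> X \<and> xbin i t \<in> X"
      by (rule inner_mem[OF cX]) (use Suc inner_init inner_step in auto)
    thus ?case using outer_x by auto
  qed
  define x1 where "x1 = x (Suc k)"
  define y1 where "y1 = y (Suc k)"
  define z1 where "z1 = z (Suc k)"
  define r0 where "r0 = A *v x1 + B *v y k + C *v z k - b"
  define lt where "lt = lam k - \<beta> *\<^sub>R r0"
  define lh where "lh = lam k - (\<tau> * \<beta>) *\<^sub>R r0"
  define D where "D = M k - \<beta> *\<^sub>R (transpose A ** A)"
  define hh where "hh = - (transpose A *v (lam k - \<beta> *\<^sub>R (A *v x k + B *v y k + C *v z k - b)))"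
  define d where "d t = gj (\<xi> k t) (xhat (xin k) (xbin k) t) + e k t" for t
  have convF: "\<forall>u\<in>X. \<forall>v\<in>X. fbar N fj u + gradf N gj u \<bullet> (v - u) \<le> fbar N fj v"
  proof (intro ballI)
    fix u v assume uv: "u \<in> X" "v \<in> X"
    have "(\<Sum>j=1..N. fj j u + gj j u \<bullet> (v - u)) \<le> (\<Sum>j=1..N. fj j v)"
    proof (rule sum_mono)
      fix j assume j: "j \<in> {1..N}"
      show "fj j u + gj j u \<bullet> (v - u) \<le> fj j v"
        using grad_ineq[of X "fj j" u v "gj j u"] fj_convex fj_deriv j uv U by auto
    qed
    hence "(1 / real N) * (\<Sum>j=1..N. fj j u + gj j u \<bullet> (v - u)) \<le> (1 / real N) * (\<Sum>j=1..N. fj j v)"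
      by (intro mult_left_mono) auto
    thus "fbar N fj u + gradf N gj u \<bullet> (v - u) \<le> fbar N fj v" unfolding avg_eq by (simp add: fbar_def)
  qed
  have descF: "\<forall>u\<in>X. \<forall>v\<in>X. fbar N fj v \<le> fbar N fj u + gradf N gj u \<bullet> (v - u) + \<nu> / 2 * qn H (v - u)"
  proof (intro ballI)
    fix u v assume uv: "u \<in> X" "v \<in> X"
    have "(\<Sum>j=1..N. fj j v) \<le> (\<Sum>j=1..N. fj j u + gj j u \<bullet> (v - u) + \<nu> / 2 * qn H (v - u))"
    proof (rule sum_mono)
      fix j assume j: "j \<in> {1..N}"
      show "fj j v \<le> fj j u + gj j u \<bullet> (v - u) + \<nu> / 2 * qn H (v - u)"
        using descent[OF cX U(2) uv(1) uv(2) _ H \<nu>, of "fj j" "gj j"] fj_deriv Lip j by auto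
    qed
    hence "(1 / real N) * (\<Sum>j=1..N. fj j v) \<le> (1 / real N) * (\<Sum>j=1..N. fj j u + gj j u \<bullet> (v - u) + \<nu> / 2 * qn H (v - u))"
      by (intro mult_left_mono) auto
    thus "fbar N fj v \<le> fbar N fj u + gradf N gj u \<bullet> (v - u) + \<nu> / 2 * qn H (v - u)"
      unfolding avg_eq2[OF N] by (simp add: fbar_def)
  qed
  have sM: "symmetric_mat (M k)" using params by auto
  have pM: "psd (M k)"
  proof -
    have "qn (M k) v \<ge> 0" for v
    proof -
      have "0 \<le> qn (M k - \<beta> *\<^sub>R (transpose A ** A)) v" using params psd_def by auto
      moreover have "0 \<le> \<beta> * qn (transpose A ** A) v" using \<beta> qn_AtA[of A v] by simp
      ultimately show ?thesis unfolding qn_diff_mat by simp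
    qed
    thus ?thesis by (simp add: psd_def)
  qed
  have xs1: "xin k 1 = x k" using inner_init by simp
  have mem: "\<forall>t\<in>{1..m k+1}. xin k t \<in> X \<and> xbin k t \<in> X"
    by (rule inner_mem[OF cX]) (use memk inner_init inner_step in auto)
  have stepk: "\<forall>t\<in>{1..m k}. (\<forall>u\<in>X. xsub_obj H (M k) (gammaT (\<eta> k) t) (d t + hh) (xbin k t) (x k) (xbin k (Suc t))
                 \<le> xsub_obj H (M k) (gammaT (\<eta> k) t) (d t + hh) (xbin k t) (x k) u)
              \<and> xin k (Suc t) = betaT t *\<^sub>R xbin k (Suc t) + (1 - betaT t) *\<^sub>R xin k t"
  proof -
    have "gj (\<xi> k t) (xhat (xin k) (xbin k) t) + e k t
        - transpose A *v (lam k - \<beta> *\<^sub>R (A *v x k + B *v y k + C *v z k - b)) = d t + hh" for t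
      by (simp add: d_def hh_def)
    note e = this
    show ?thesis
    proof (intro ballI)
      fix t assume t: "t \<in> {1..m k}"
      have "(\<forall>u\<in>X. xsub_obj H (M k) (gammaT (\<eta> k) t)
                   (gj (\<xi> k t) (xhat (xin k) (xbin k) t) + e k t
                    - (transpose A *v (lam k - \<beta> *\<^sub>R (A *v x k + B *v y k + C *v z k - b))))
                   (xbin k t) (x k) (xbin k (Suc t))
                 \<le> xsub_obj H (M k) (gammaT (\<eta> k) t)
                   (gj (\<xi> k t) (xhat (xin k) (xbin k) t) + e k t
                    - (transpose A *v (lam k - \<beta> *\<^sub>R (A *v x k + B *v y k + C *v z k - b))))
                   (xbin k t) (x k) u) \<and>
          xin k (Suc t) = betaT t *\<^sub>R xbin k (Suc t) + (1 - betaT t) *\<^sub>R xin k t"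
        using inner_step t by blast
      thus "(\<forall>u\<in>X. xsub_obj H (M k) (gammaT (\<eta> k) t) (d t + hh) (xbin k t) (x k) (xbin k (Suc t))
                 \<le> xsub_obj H (M k) (gammaT (\<eta> k) t) (d t + hh) (xbin k t) (x k) u)
              \<and> xin k (Suc t) = betaT t *\<^sub>R xbin k (Suc t) + (1 - betaT t) *\<^sub>R xin k t"
        by (simp only: e) blast
    qed
  qed
  have m1: "m k \<ge> 1" using params by auto
  have XB: "fbar N fj xw - fbar N fj x1 + (xw - x1) \<bullet> (hh + M k *v (x1 - x k))
      \<ge> zeta H \<nu> (\<eta> k) (m k) (xb k) (xb (Suc k))
          (\<lambda>t. gradf N gj (xhat (xin k) (xbin k) t) - (gj (\<xi> k t) (xhat (xin k) (xbin k) t) + e k t)) (xbin k) xw"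
    if xw: "xw \<in> X" for xw
    using xsub_bound[OF cX convF descF H sM pM \<nu> \<eta>k(1) \<eta>k(2) xs1 mem stepk m1 xw]
    using outer_x inner_init unfolding x1_def d_def by simp
  define rY where "rY = A *v x1 + C *v z k - b - (1 / \<beta>) *\<^sub>R lh"
  have eqY: "A *v x (Suc k) + B *v u + C *v z k - b
     - (1 / \<beta>) *\<^sub>R (lam k - (\<tau> * \<beta>) *\<^sub>R (A *v x (Suc k) + B *v y k + C *v z k - b)) = B *v u + rY" for u
    unfolding rY_def lh_def r0_def x1_def by (simp add: algebra_simps)
  have minY: "\<forall>u\<in>Y. g y1 + ereal (\<beta> / 2 * (norm (B *v y1 + rY))^2 + 1/2 * qn L1 (y1 - y k))
                 \<le> g u + ereal (\<beta> / 2 * (norm (B *v u + rY))^2 + 1/2 * qn L1 (u - y k))"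
    using spec[OF outer_y, of k] unfolding eqY y1_def by blast
  obtain gy where gy: "g y1 = ereal gy" and gyb: "\<forall>u\<in>Y. ereal (gy - (u - y1) \<bullet> (\<beta> *\<^sub>R (transpose B *v (B *v y1 + rY)) + L1 *v (y1 - y k))) \<le> g u"
    using block_opt[OF _ g L(1) _ minY] Y outer_y unfolding y1_def by blast
  define rZ where "rZ = A *v x1 + B *v y k - b - (1 / \<beta>) *\<^sub>R lh"
  have eqZ: "A *v x (Suc k) + B *v y k + C *v u - b
     - (1 / \<beta>) *\<^sub>R (lam k - (\<tau> * \<beta>) *\<^sub>R (A *v x (Suc k) + B *v y k + C *v z k - b)) = C *v u + rZ" for u
    unfolding rZ_def lh_def r0_def x1_def by (simp add: algebra_simps)
  have minZ: "\<forall>u\<in>Z. l z1 + ereal (\<beta> / 2 * (norm (C *v z1 + rZ))^2 + 1/2 * qn L2 (z1 - z k))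
                 \<le> l u + ereal (\<beta> / 2 * (norm (C *v u + rZ))^2 + 1/2 * qn L2 (u - z k))"
    using spec[OF outer_z, of k] unfolding eqZ z1_def by blast
  obtain gz where gz: "l z1 = ereal gz" and gzb: "\<forall>u\<in>Z. ereal (gz - (u - z1) \<bullet> (\<beta> *\<^sub>R (transpose C *v (C *v z1 + rZ)) + L2 *v (z1 - z k))) \<le> l u"
    using block_opt[OF _ l L(2) _ minZ] Z outer_z unfolding z1_def by blast
  have I1: "hh + M k *v (x1 - x k) = - (transpose A *v lt) - D *v (x k - x1)"
    unfolding hh_def lt_def r0_def D_def
    by (simp add: algebra_simps matrix_vector_mul_assoc[symmetric] scaleR_matrix_vector_assoc[symmetric] del: transpose_matrix_vector)
  have I2: "\<beta> *\<^sub>R (transpose B *v (B *v y1 + rY)) + L1 *v (y1 - y k)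
      = - (transpose B *v lt) - ((L1 + \<beta> *\<^sub>R (transpose B ** B)) *v (y k - y1) - \<tau> *\<^sub>R (transpose B *v (lam k - lt)))"
    unfolding rY_def lt_def lh_def r0_def using \<beta>
    by (simp add: algebra_simps matrix_vector_mul_assoc[symmetric] scaleR_matrix_vector_assoc[symmetric] del: transpose_matrix_vector)
  have I3: "\<beta> *\<^sub>R (transpose C *v (C *v z1 + rZ)) + L2 *v (z1 - z k)
      = - (transpose C *v lt) - ((L2 + \<beta> *\<^sub>R (transpose C ** C)) *v (z k - z1) - \<tau> *\<^sub>R (transpose C *v (lam k - lt)))"
    unfolding rZ_def lt_def lh_def r0_def using \<beta>
    by (simp add: algebra_simps matrix_vector_mul_assoc[symmetric] scaleR_matrix_vector_assoc[symmetric] del: transpose_matrix_vector)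
  have I4: "- (B *v (y k - y1)) - (C *v (z k - z1)) + (1 / \<beta>) *\<^sub>R (lam k - lt) = A *v x1 + B *v y1 + C *v z1 - b"
    unfolding lt_def r0_def using \<beta> by (simp add: algebra_simps)
  have IT: "u \<bullet> (transpose P *v v) = v \<bullet> (P *v u)" for P :: "real^'q^'m" and u v
    by (metis dot_transpose inner_commute)
  show ?thesis
  proof (intro ballI)
    fix w assume w: "w \<in> X \<times> Y \<times> Z \<times> (UNIV :: (real^'m) set)"
    obtain xw yw zw lw where wd: "w = (xw, yw, zw, lw)" by (cases w) auto
    have xw: "xw \<in> X" and yw: "yw \<in> Y" and zw: "zw \<in> Z" using w wd by auto
    define JJ where "JJ = - ((xw - x1) \<bullet> (transpose A *v lw)) - (yw - y1) \<bullet> (transpose B *v lw)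
        - (zw - z1) \<bullet> (transpose C *v lw) + (lw - lt) \<bullet> (A *v xw + B *v yw + C *v zw - b)"
    define QQ where "QQ = (xw - x1) \<bullet> (D *v (x k - x1))
        + (yw - y1) \<bullet> ((L1 + \<beta> *\<^sub>R (transpose B ** B)) *v (y k - y1) - \<tau> *\<^sub>R (transpose B *v (lam k - lt)))
        + (zw - z1) \<bullet> ((L2 + \<beta> *\<^sub>R (transpose C ** C)) *v (z k - z1) - \<tau> *\<^sub>R (transpose C *v (lam k - lt)))
        + (lw - lt) \<bullet> (A *v x1 + B *v y1 + C *v z1 - b)"
    define ZZ where "ZZ = zeta H \<nu> (\<eta> k) (m k) (xb k) (xb (Suc k))
          (\<lambda>t. gradf N gj (xhat (xin k) (xbin k) t) - (gj (\<xi> k t) (xhat (xin k) (xbin k) t) + e k t)) (xbin k) xw"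
    have J: "(w - (x1, y1, z1, lt)) \<bullet> Jop A B C b w = JJ"
      unfolding wd JJ_def Jop_def by simp
    have Q: "(w - (x1, y1, z1, lt)) \<bullet> Qmul D L1 L2 B C \<beta> \<tau> ((x k, y k, z k, lam k) - (x1, y1, z1, lt)) = QQ"
      unfolding wd QQ_def Qmul_def using I4 by simp
    have ID: "JJ + (xw - x1) \<bullet> (transpose A *v lt) + (yw - y1) \<bullet> (transpose B *v lt) + (zw - z1) \<bullet> (transpose C *v lt)
        = (lw - lt) \<bullet> (A *v x1 + B *v y1 + C *v z1 - b)"
      unfolding JJ_def IT
      by (simp add: inner_add_left inner_add_right inner_diff_left inner_diff_right
          matrix_vector_mult_diff_distrib matrix_vector_right_distrib del: transpose_matrix_vector)
    have xb: "fbar N fj xw - fbar N fj x1 + (xw - x1) \<bullet> (- (transpose A *v lt) - D *v (x k - x1)) \<ge> ZZ"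
      using XB[OF xw] unfolding I1 ZZ_def .
    have real_ineq: "(fbar N fj xw + a + c) - (fbar N fj x1 + gy + gz) + JJ \<ge> QQ + ZZ"
      if a: "a \<ge> gy - (yw - y1) \<bullet> (- (transpose B *v lt) - ((L1 + \<beta> *\<^sub>R (transpose B ** B)) *v (y k - y1) - \<tau> *\<^sub>R (transpose B *v (lam k - lt))))"
      and c: "c \<ge> gz - (zw - z1) \<bullet> (- (transpose C *v lt) - ((L2 + \<beta> *\<^sub>R (transpose C ** C)) *v (z k - z1) - \<tau> *\<^sub>R (transpose C *v (lam k - lt))))"
      for a c
      using xb a c ID unfolding QQ_def by (simp add: inner_diff_right inner_minus_right)
    have Fwt: "Fobj (fbar N fj) g l (x1, y1, z1, lt) = ereal (fbar N fj x1 + gy + gz)"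
      unfolding Fobj_def using gy gz by simp
    have gyw: "ereal (gy - (yw - y1) \<bullet> (- (transpose B *v lt) - ((L1 + \<beta> *\<^sub>R (transpose B ** B)) *v (y k - y1) - \<tau> *\<^sub>R (transpose B *v (lam k - lt))))) \<le> g yw"
      using gyb yw unfolding I2 by blast
    have lzw: "ereal (gz - (zw - z1) \<bullet> (- (transpose C *v lt) - ((L2 + \<beta> *\<^sub>R (transpose C ** C)) *v (z k - z1) - \<tau> *\<^sub>R (transpose C *v (lam k - lt))))) \<le> l zw"
      using gzb zw unfolding I3 by blast
    have main: "Fobj (fbar N fj) g l w - ereal (fbar N fj x1 + gy + gz) + ereal JJ \<ge> ereal (QQ + ZZ)"
    proof (cases "g yw")
      case (real a)
      show ?thesis
      proof (cases "l zw")
        case (real c)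
        have "(fbar N fj xw + a + c) - (fbar N fj x1 + gy + gz) + JJ \<ge> QQ + ZZ"
          by (rule real_ineq) (use gyw lzw \<open>g yw = ereal a\<close> real in auto)
        thus ?thesis unfolding wd Fobj_def using \<open>g yw = ereal a\<close> real by simp
      next
        case PInf thus ?thesis unfolding wd Fobj_def using \<open>g yw = ereal a\<close> by simp
      next
        case MInf thus ?thesis using lzw by simp
      qed
    next
      case PInf
      have "l zw \<noteq> - \<infinity>" using lzw by auto
      thus ?thesis unfolding wd Fobj_def using PInf by (cases "l zw") auto
    next
      case MInf thus ?thesis using gyw by simp
    qed
    show "let wk = (x k, y k, z k, lam k);
          wt = (x (Suc k), y (Suc k), z (Suc k),
                lam k - \<beta> *\<^sub>R (A *v x (Suc k) + B *v y k + C *v z k - b));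
          \<delta> = (\<lambda>t. gradf N gj (xhat (xin k) (xbin k) t)
                   - (gj (\<xi> k t) (xhat (xin k) (xbin k) t) + e k t))
      in Fobj (fbar N fj) g l w - Fobj (fbar N fj) g l wt + ereal ((w - wt) \<bullet> Jop A B C b w)
         \<ge> ereal ((w - wt) \<bullet> Qmul (M k - \<beta> *\<^sub>R (transpose A ** A)) L1 L2 B C \<beta> \<tau> (wk - wt)
                  + zeta H \<nu> (\<eta> k) (m k) (xb k) (xb (Suc k)) \<delta> (xbin k) (fst w))"
      unfolding Let_def
      using main J Q Fwt unfolding x1_def[symmetric] y1_def[symmetric] z1_def[symmetric]
        r0_def[symmetric] lt_def[symmetric] D_def[symmetric] ZZ_def wd by simp
  qed
qed

end
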